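(* Let $G$ be a topological groupoid such that $G^{(0)}$ is Hausdorff and $r\colon G\to G^{(0)}$ is open, and let $Z$ be a locally compact space endowed with a continuous right action of $G$ with momentum map $p\colon Z\to G^{(0)}$. Then $\mathcal{H}Z$ carries a continuous right action of $G$ extending the one on $Z$: the momentum map is the unique continuous map $\mathcal{H}p\colon\mathcal{H}Z\to G^{(0)}$ with $S\subset p^{-1}(\mathcal{H}p(S))$, and $S\cdot g=\{sg: s\in S\}$ for $g\in G^{\mathcal{H}p(S)}$; in particular $\{z\}\cdot g=\{zg\}$.
   Context: Quasi-compact: every open cover has a finite subcover; locally compact: every point has a quasi-compact Hausdorff neighbourhood (not necessarily Hausdorff). $\mathcal{H}Z$ is the set of nonempty $S\subset Z$ such that every finite family of open sets each meeting $S$ has nonempty intersection, with the topology generated by $\{S:S\cap V\neq\emptyset\}$ ($V$ open) and $\{S:S\cap Q=\emptyset\}$ ($Q$ quasi-compact); $z\in Z$ is identified with $\{z\}$ (this inclusion need not be continuous). *)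

theory Defs
  imports "HOL-Analysis.Analysis"
begin

text \<open>A groupoid is given by a topology G on its arrows, range r, source s,
 partial multiplication m (defined on pairs (g,h) with s g = r h) and inversion i.\<close>

definition units :: "'g topology \<Rightarrow> ('g \<Rightarrow> 'g) \<Rightarrow> 'g set" where
  "units G r = r ` topspace G"

definition unit_space :: "'g topology \<Rightarrow> ('g \<Rightarrow> 'g) \<Rightarrow> 'g topology" where
  "unit_space G r = subtopology G (units G r)"

definition topological_groupoid ::
  "'g topology \<Rightarrow> ('g \<Rightarrow> 'g) \<Rightarrow> ('g \<Rightarrow> 'g) \<Rightarrow> ('g \<Rightarrow> 'g \<Rightarrow> 'g) \<Rightarrow> ('g \<Rightarrow> 'g) \<Rightarrow> bool" where
  "topological_groupoid G r s m i \<longleftrightarrow>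
     (\<forall>g\<in>topspace G. r g \<in> topspace G \<and> s g \<in> topspace G \<and> i g \<in> topspace G) \<and>
     s ` topspace G = r ` topspace G \<and>
     (\<forall>x\<in>units G r. r x = x \<and> s x = x) \<and>
     (\<forall>g\<in>topspace G. \<forall>h\<in>topspace G. s g = r h \<longrightarrow>
        m g h \<in> topspace G \<and> r (m g h) = r g \<and> s (m g h) = s h) \<and>
     (\<forall>g\<in>topspace G. \<forall>h\<in>topspace G. \<forall>k\<in>topspace G. s g = r h \<and> s h = r k \<longrightarrow>
        m (m g h) k = m g (m h k)) \<and>
     (\<forall>g\<in>topspace G. m (r g) g = g \<and> m g (s g) = g) \<and>
     (\<forall>g\<in>topspace G. r (i g) = s g \<and> s (i g) = r g \<and> m g (i g) = r g \<and> m (i g) g = s g) \<and>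
     continuous_map G G r \<and> continuous_map G G s \<and> continuous_map G G i \<and>
     continuous_map (subtopology (prod_topology G G)
                       {(g,h). g \<in> topspace G \<and> h \<in> topspace G \<and> s g = r h})
                    G (\<lambda>(g,h). m g h)"

definition continuous_right_action ::
  "'g topology \<Rightarrow> ('g \<Rightarrow> 'g) \<Rightarrow> ('g \<Rightarrow> 'g) \<Rightarrow> ('g \<Rightarrow> 'g \<Rightarrow> 'g) \<Rightarrow>
   'x topology \<Rightarrow> ('x \<Rightarrow> 'g) \<Rightarrow> ('x \<Rightarrow> 'g \<Rightarrow> 'x) \<Rightarrow> bool" where
  "continuous_right_action G r s m X p act \<longleftrightarrow>
     continuous_map X (unit_space G r) p \<and>
     (\<forall>x\<in>topspace X. \<forall>g\<in>topspace G. p x = r g \<longrightarrow>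
        act x g \<in> topspace X \<and> p (act x g) = s g) \<and>
     (\<forall>x\<in>topspace X. act x (p x) = x) \<and>
     (\<forall>x\<in>topspace X. \<forall>g\<in>topspace G. \<forall>h\<in>topspace G. p x = r g \<and> s g = r h \<longrightarrow>
        act (act x g) h = act x (m g h)) \<and>
     continuous_map (subtopology (prod_topology X G)
                       {(x,g). x \<in> topspace X \<and> g \<in> topspace G \<and> p x = r g})
                    X (\<lambda>(x,g). act x g)"

definition locally_compact_qc :: "'a topology \<Rightarrow> bool" where
  "locally_compact_qc Z \<longleftrightarrow>
     (\<forall>z\<in>topspace Z. \<exists>U K. openin Z U \<and> compactin Z K \<and> z \<in> U \<and> U \<subseteq> K \<and>
        Hausdorff_space (subtopology Z K))"

definition HZ_set :: "'a topology \<Rightarrow> 'a set set" where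
  "HZ_set Z = {S. S \<noteq> {} \<and> S \<subseteq> topspace Z \<and>
     (\<forall>F. finite F \<and> (\<forall>V\<in>F. openin Z V \<and> V \<inter> S \<noteq> {}) \<longrightarrow> topspace Z \<inter> \<Inter>F \<noteq> {})}"

definition HZ :: "'a topology \<Rightarrow> 'a set topology" where
  "HZ Z = topology_generated_by
     ({{S \<in> HZ_set Z. S \<inter> V \<noteq> {}} | V. openin Z V} \<union>
      {{S \<in> HZ_set Z. S \<inter> Q = {}} | Q. compactin Z Q})"

end

theory Submission
  imports Defs
begin

lemma openin_fin_Inter:
  assumes "finite I" "\<And>x. x \<in> I \<Longrightarrow> openin X (B x)"
  shows "openin X (topspace X \<inter> (\<Inter>x\<in>I. B x))"
  using assms
proof (induction I rule: finite_induct)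
  case empty then show ?case by simp
next
  case (insert a I)
  have "topspace X \<inter> (\<Inter>x\<in>insert a I. B x) = B a \<inter> (topspace X \<inter> (\<Inter>x\<in>I. B x))"
    using openin_subset[OF insert.prems[of a]] by auto
  then show ?case using insert by auto
qed

lemma HZ_topspace: "topspace (HZ Z) = HZ_set Z"
proof -
  have "HZ_set Z \<in> {{S \<in> HZ_set Z. S \<inter> Q = {}} | Q. compactin Z Q}" by force
  then have "HZ_set Z \<subseteq> \<Union>({{S \<in> HZ_set Z. S \<inter> V \<noteq> {}} | V. openin Z V} \<union>
      {{S \<in> HZ_set Z. S \<inter> Q = {}} | Q. compactin Z Q})" by (intro Union_upper UnI2)
  moreover have "\<Union>({{S \<in> HZ_set Z. S \<inter> V \<noteq> {}} | V. openin Z V} \<union>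
      {{S \<in> HZ_set Z. S \<inter> Q = {}} | Q. compactin Z Q}) \<subseteq> HZ_set Z" by auto
  ultimately show ?thesis unfolding HZ_def topology_generated_by_topspace by (rule antisym[rotated])
qed

lemma HZ_open_meet: "openin Z V \<Longrightarrow> openin (HZ Z) {S \<in> HZ_set Z. S \<inter> V \<noteq> {}}"
  unfolding HZ_def by (rule topology_generated_by_Basis) blast

lemma HZ_open_miss: "compactin Z Q \<Longrightarrow> openin (HZ Z) {S \<in> HZ_set Z. S \<inter> Q = {}}"
  unfolding HZ_def by (rule topology_generated_by_Basis) blast

lemma HZ_set_sing: "z \<in> topspace Z \<Longrightarrow> {z} \<in> HZ_set Z"
  unfolding HZ_set_def by auto

lemma HZ_Union: "\<Union>({{S \<in> HZ_set Z. S \<inter> V \<noteq> {}} | V. openin Z V} \<union>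
      {{S \<in> HZ_set Z. S \<inter> Q = {}} | Q. compactin Z Q}) = HZ_set Z"
  using HZ_topspace[of Z] unfolding HZ_def topology_generated_by_topspace .

lemma cont_into_HZ:
  assumes f: "\<And>x. x \<in> topspace X \<Longrightarrow> f x \<in> HZ_set Z"
    and mt: "\<And>V. openin Z V \<Longrightarrow> openin X {x \<in> topspace X. f x \<inter> V \<noteq> {}}"
    and ms: "\<And>Q. compactin Z Q \<Longrightarrow> openin X {x \<in> topspace X. f x \<inter> Q = {}}"
  shows "continuous_map X (HZ Z) f"
  unfolding HZ_def
proof (rule continuous_on_generated_topo)
  fix U assume "U \<in> {{S \<in> HZ_set Z. S \<inter> V \<noteq> {}} | V. openin Z V} \<union>
      {{S \<in> HZ_set Z. S \<inter> Q = {}} | Q. compactin Z Q}"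
  then show "openin X (f -` U \<inter> topspace X)"
  proof
    assume "U \<in> {{S \<in> HZ_set Z. S \<inter> V \<noteq> {}} | V. openin Z V}"
    then obtain V where V: "openin Z V" "U = {S \<in> HZ_set Z. S \<inter> V \<noteq> {}}" by blast
    have "f -` U \<inter> topspace X = {x \<in> topspace X. f x \<inter> V \<noteq> {}}" using V(2) f by auto
    then show ?thesis using mt[OF V(1)] by simp
  next
    assume "U \<in> {{S \<in> HZ_set Z. S \<inter> Q = {}} | Q. compactin Z Q}"
    then obtain Q where Q: "compactin Z Q" "U = {S \<in> HZ_set Z. S \<inter> Q = {}}" by blast
    have "f -` U \<inter> topspace X = {x \<in> topspace X. f x \<inter> Q = {}}" using Q(2) f by auto
    then show ?thesis using ms[OF Q(1)] by simp
  qed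
next
  show "f ` topspace X \<subseteq> \<Union>({{S \<in> HZ_set Z. S \<inter> V \<noteq> {}} | V. openin Z V} \<union>
      {{S \<in> HZ_set Z. S \<inter> Q = {}} | Q. compactin Z Q})"
    unfolding HZ_Union using f by blast
qed

lemma openin_box_sub:
  assumes "openin X U" "openin Y V"
  shows "openin (subtopology (prod_topology X Y) D) ((U \<times> V) \<inter> D)"
  unfolding openin_subtopology using assms openin_prod_Times_iff by blast

locale hzctx =
  fixes G :: "'g topology" and r s :: "'g \<Rightarrow> 'g" and m :: "'g \<Rightarrow> 'g \<Rightarrow> 'g"
    and i :: "'g \<Rightarrow> 'g" and Z :: "'z topology" and p :: "'z \<Rightarrow> 'g"
    and act :: "'z \<Rightarrow> 'g \<Rightarrow> 'z"
  assumes grp: "topological_groupoid G r s m i"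
    and haus: "Hausdorff_space (unit_space G r)"
    and ropen: "open_map G (unit_space G r) r"
    and lc: "locally_compact_qc Z"
    and ca: "continuous_right_action G r s m Z p act"
begin

lemma G_closed: "g \<in> topspace G \<Longrightarrow> r g \<in> topspace G \<and> s g \<in> topspace G \<and> i g \<in> topspace G"
  using grp unfolding topological_groupoid_def by blast

lemma inv_laws: "g \<in> topspace G \<Longrightarrow> r (i g) = s g \<and> s (i g) = r g \<and> m g (i g) = r g \<and> m (i g) g = s g"
  using grp unfolding topological_groupoid_def by blast

lemma topspace_unit: "topspace (unit_space G r) = r ` topspace G"
  using G_closed unfolding unit_space_def units_def by auto

lemma s_unit: "g \<in> topspace G \<Longrightarrow> s g \<in> topspace (unit_space G r)"
  using grp unfolding topological_groupoid_def topspace_unit by blast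

lemma r_unit: "g \<in> topspace G \<Longrightarrow> r g \<in> topspace (unit_space G r)"
  unfolding topspace_unit by blast

lemma s_cont: "continuous_map G G s" and i_cont: "continuous_map G G i"
  using grp unfolding topological_groupoid_def by blast+

lemma p_cont: "continuous_map Z (unit_space G r) p"
  using ca unfolding continuous_right_action_def by blast

lemma act_in: "x \<in> topspace Z \<Longrightarrow> g \<in> topspace G \<Longrightarrow> p x = r g \<Longrightarrow> act x g \<in> topspace Z \<and> p (act x g) = s g"
  using ca unfolding continuous_right_action_def by blast

lemma act_unit: "x \<in> topspace Z \<Longrightarrow> act x (p x) = x"
  using ca unfolding continuous_right_action_def by blast

lemma act_assoc: "x \<in> topspace Z \<Longrightarrow> g \<in> topspace G \<Longrightarrow> h \<in> topspace G \<Longrightarrow> p x = r g \<Longrightarrow> s g = r h \<Longrightarrow>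
   act (act x g) h = act x (m g h)"
  using ca unfolding continuous_right_action_def by blast

lemma act_contmap: "continuous_map (subtopology (prod_topology Z G)
                       {(x,g). x \<in> topspace Z \<and> g \<in> topspace G \<and> p x = r g}) Z (\<lambda>(x,g). act x g)"
  using ca unfolding continuous_right_action_def by blast

lemma act_inv: "x \<in> topspace Z \<Longrightarrow> g \<in> topspace G \<Longrightarrow> p x = r g \<Longrightarrow> act (act x g) (i g) = x"
  using act_assoc[of x g "i g"] inv_laws[of g] G_closed[of g] act_unit[of x] by simp

lemma pZ: "x \<in> topspace Z \<Longrightarrow> p x \<in> topspace (unit_space G r)"
  using p_cont unfolding continuous_map_def by blast

lemma act_cont_pt:
  assumes "openin Z V" "x \<in> topspace Z" "g \<in> topspace G" "p x = r g" "act x g \<in> V"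
  shows "\<exists>A B. openin Z A \<and> openin G B \<and> x \<in> A \<and> g \<in> B \<and>
     (\<forall>x'\<in>A. \<forall>h\<in>B. p x' = r h \<longrightarrow> act x' h \<in> V)"
proof -
  define D where "D = {(x,g). x \<in> topspace Z \<and> g \<in> topspace G \<and> p x = r g}"
  define P where "P = {y \<in> topspace (subtopology (prod_topology Z G) D). (\<lambda>(x,g). act x g) y \<in> V}"
  have "openin (subtopology (prod_topology Z G) D) P"
    unfolding P_def D_def using act_contmap assms(1) by (rule openin_continuous_map_preimage)
  then obtain T where T: "openin (prod_topology Z G) T" "P = T \<inter> D"
    unfolding openin_subtopology by blast
  have PD: "y \<in> P \<longleftrightarrow> y \<in> D \<and> (\<lambda>(x,g). act x g) y \<in> V" for y
    unfolding P_def D_def by auto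
  have "(x,g) \<in> P" unfolding PD using assms unfolding D_def by simp
  then have "(x,g) \<in> T" using T(2) by blast
  note xT = this
  have all: "\<forall>a b. (a,b) \<in> T \<longrightarrow> (\<exists>U V. openin Z U \<and> openin G V \<and> a \<in> U \<and> b \<in> V \<and> U \<times> V \<subseteq> T)"
    using T(1) by (simp only: openin_prod_topology_alt)
  have "\<exists>U V. openin Z U \<and> openin G V \<and> x \<in> U \<and> g \<in> V \<and> U \<times> V \<subseteq> T"
    using all[rule_format, OF xT] .
  then obtain A B where AB: "openin Z A" "openin G B" "x \<in> A" "g \<in> B" "A \<times> B \<subseteq> T"
    by blast
  have key: "\<forall>x'\<in>A. \<forall>h\<in>B. p x' = r h \<longrightarrow> act x' h \<in> V"
  proof (intro ballI impI)
    fix x' h assume xh: "x' \<in> A" "h \<in> B" "p x' = r h"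
    have "x' \<in> topspace Z" using xh(1) openin_subset[OF AB(1)] by blast
    moreover have "h \<in> topspace G" using xh(2) openin_subset[OF AB(2)] by blast
    ultimately have "(x',h) \<in> D" using xh(3) unfolding D_def by simp
    moreover have "(x',h) \<in> T" using AB(5) xh(1,2) by blast
    ultimately have "(x',h) \<in> P" using T(2) by blast
    then show "act x' h \<in> V" unfolding PD by simp
  qed
  show ?thesis
    apply (rule exI[of _ A], rule exI[of _ B])
    using AB(1-4) key by blast
qed

lemma act_inv_cont_pt:
  assumes "openin Z V" "q \<in> topspace Z" "g \<in> topspace G" "p q = s g" "act q (i g) \<in> V"
  shows "\<exists>A B. openin Z A \<and> openin G B \<and> q \<in> A \<and> g \<in> B \<and>
     (\<forall>q'\<in>A. \<forall>h\<in>B. p q' = s h \<longrightarrow> act q' (i h) \<in> V)"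
proof -
  have ig: "i g \<in> topspace G" "p q = r (i g)" using G_closed[OF assms(3)] inv_laws[OF assms(3)] assms(4) by auto
  obtain A B' where AB: "openin Z A" "openin G B'" "q \<in> A" "i g \<in> B'"
     "\<forall>x'\<in>A. \<forall>h\<in>B'. p x' = r h \<longrightarrow> act x' h \<in> V"
    using act_cont_pt[OF assms(1,2) ig assms(5)] by blast
  let ?B = "{h \<in> topspace G. i h \<in> B'}"
  have "openin G ?B" using openin_continuous_map_preimage[OF i_cont AB(2)] .
  moreover have "\<forall>q'\<in>A. \<forall>h\<in>?B. p q' = s h \<longrightarrow> act q' (i h) \<in> V"
  proof (intro ballI impI)
    fix q' h assume "q' \<in> A" "h \<in> ?B" "p q' = s h"
    then show "act q' (i h) \<in> V" using AB(5) inv_laws[of h] by auto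
  qed
  ultimately show ?thesis
    apply (intro exI[of _ A] exI[of _ ?B])
    using AB(1,3,4) assms(3) by simp
qed


lemma s_cont_unit: "continuous_map G (unit_space G r) s"
  unfolding unit_space_def continuous_map_in_subtopology
  using s_cont s_unit topspace_unit unfolding units_def by auto

lemma HZ_sub: "S \<in> HZ_set Z \<Longrightarrow> S \<subseteq> topspace Z" and HZ_ne: "S \<in> HZ_set Z \<Longrightarrow> S \<noteq> {}"
  unfolding HZ_set_def by blast+

lemma HZ_fip: "S \<in> HZ_set Z \<Longrightarrow> finite F \<Longrightarrow> (\<And>V. V \<in> F \<Longrightarrow> openin Z V \<and> V \<inter> S \<noteq> {}) \<Longrightarrow>
   topspace Z \<inter> \<Inter>F \<noteq> {}"
  unfolding HZ_set_def by blast

lemma p_const: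
  assumes S: "S \<in> HZ_set Z" and xy: "x \<in> S" "y \<in> S"
  shows "p x = p y"
proof (rule ccontr)
  assume ne: "p x \<noteq> p y"
  have Ssub: "S \<subseteq> topspace Z" using S unfolding HZ_set_def by blast
  have "p x \<in> topspace (unit_space G r)" "p y \<in> topspace (unit_space G r)"
    using pZ Ssub xy by auto
  then obtain U V where UV: "openin (unit_space G r) U" "openin (unit_space G r) V"
     "p x \<in> U" "p y \<in> V" "disjnt U V"
    using haus ne unfolding Hausdorff_space_def by blast
  define A where "A = {z \<in> topspace Z. p z \<in> U}"
  define B where "B = {z \<in> topspace Z. p z \<in> V}"
  have oA: "openin Z A" unfolding A_def using openin_continuous_map_preimage[OF p_cont UV(1)] .
  have oB: "openin Z B" unfolding B_def using openin_continuous_map_preimage[OF p_cont UV(2)] .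
  have xyAB: "x \<in> A \<inter> S" "y \<in> B \<inter> S" using xy Ssub UV unfolding A_def B_def by auto
  have "topspace Z \<inter> \<Inter>{A, B} \<noteq> {}"
  proof (rule HZ_fip[OF S])
    show "finite {A, B}" by simp
  next
    fix W assume "W \<in> {A, B}"
    then show "openin Z W \<and> W \<inter> S \<noteq> {}" using oA oB xyAB by blast
  qed
  moreover have "A \<inter> B = {}" using UV(5) unfolding A_def B_def disjnt_def by auto
  ultimately show False by auto
qed

definition Hp :: "'z set \<Rightarrow> 'g" where "Hp S = p (SOME x. x \<in> S)"
definition Hact :: "'z set \<Rightarrow> 'g \<Rightarrow> 'z set" where "Hact S g = (\<lambda>x. act x g) ` S"

lemma Hp_eq:
  assumes S: "S \<in> HZ_set Z" and x: "x \<in> S" shows "Hp S = p x"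
proof -
  have "(SOME x. x \<in> S) \<in> S" using x by (rule someI)
  then show ?thesis unfolding Hp_def by (rule p_const[OF S _ x])
qed

lemma hausK_unique:
  assumes U: "openin Z U" "U \<subseteq> K" and K: "Hausdorff_space (subtopology Z K)"
    and S: "S \<in> HZ_set Z" and x: "x \<in> S" "x \<in> U" and y: "y \<in> S" "y \<in> U"
  shows "x = y"
proof (rule ccontr)
  assume ne: "x \<noteq> y"
  have "x \<in> topspace (subtopology Z K)" "y \<in> topspace (subtopology Z K)"
    using openin_subset[OF U(1)] U(2) x y by auto
  then obtain A' B' where AB: "openin (subtopology Z K) A'" "openin (subtopology Z K) B'"
     "x \<in> A'" "y \<in> B'" "disjnt A' B'"
    using K ne unfolding Hausdorff_space_def by blast
  have "\<exists>A. openin Z A \<and> A' = A \<inter> K" using AB(1) by (simp only: openin_subtopology)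
  then obtain A where A: "openin Z A" "A' = A \<inter> K" by blast
  have "\<exists>B. openin Z B \<and> B' = B \<inter> K" using AB(2) by (simp only: openin_subtopology)
  then obtain B where B: "openin Z B" "B' = B \<inter> K" by blast
  have o: "openin Z (A \<inter> U)" "openin Z (B \<inter> U)" using A B U by auto
  have m: "(A \<inter> U) \<inter> S \<noteq> {}" "(B \<inter> U) \<inter> S \<noteq> {}" using A B AB x y by auto
  have "topspace Z \<inter> \<Inter>{A \<inter> U, B \<inter> U} \<noteq> {}"
    by (rule HZ_fip[OF S]) (use o m in auto)
  moreover have "(A \<inter> U) \<inter> (B \<inter> U) = {}" using AB(5) A B U(2) unfolding disjnt_def by auto
  ultimately show False by auto
qed

lemma lc_sep:
  assumes S: "S \<in> HZ_set Z" and c: "c \<in> topspace Z" "c \<notin> S"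
  shows "\<exists>W L. openin Z W \<and> compactin Z L \<and> c \<in> W \<and> W \<subseteq> L \<and> L \<inter> S = {}"
proof -
  obtain U K where UK: "openin Z U" "compactin Z K" "c \<in> U" "U \<subseteq> K" "Hausdorff_space (subtopology Z K)"
    using lc c unfolding locally_compact_qc_def by blast
  define X where "X = subtopology Z K"
  have KZ: "K \<subseteq> topspace Z" using UK(2) by (rule compactin_subset_topspace)
  have tX: "topspace X = K" unfolding X_def using KZ by auto
  have cX: "compact_space X" unfolding X_def using UK(2) by (rule compact_space_subtopology)
  have hX: "Hausdorff_space X" unfolding X_def using UK(5) .
  have rX: "regular_space X" using cX hX by (rule compact_Hausdorff_imp_regular_space)
  have oU: "openin X U" unfolding X_def openin_subtopology using UK(1,4) by blast
  have c1: "closedin X (K - U)" using oU tX by (metis closedin_topspace closedin_diff)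
  have c2: "closedin X (S \<inter> U)"
  proof (cases "S \<inter> U = {}")
    case True then show ?thesis by simp
  next
    case False
    then obtain x where x: "x \<in> S" "x \<in> U" by blast
    have "S \<inter> U = {x}" using hausK_unique[OF UK(1,4,5) S] x by blast
    moreover have "x \<in> topspace X" using x UK(4) tX by auto
    ultimately show ?thesis using closedin_Hausdorff_singleton[OF hX] by simp
  qed
  have cF: "closedin X ((K - U) \<union> (S \<inter> U))" using c1 c2 by blast
  have cnot: "c \<in> topspace X - ((K - U) \<union> (S \<inter> U))" using c UK(3,4) tX by auto
  obtain W0 where W0: "openin X W0" "c \<in> W0" "disjnt ((K - U) \<union> (S \<inter> U)) (X closure_of W0)"
    using rX cF cnot unfolding regular_space by blast
  define L where "L = X closure_of W0"
  have LK: "L \<subseteq> K" unfolding L_def using closure_of_subset_topspace tX by metis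
  have LU: "L \<subseteq> U" using LK W0(3) unfolding L_def disjnt_def by blast
  have LS: "L \<inter> S = {}" using LU W0(3) unfolding L_def disjnt_def by blast
  have "compactin X L"
    using closed_compactin[of X "topspace X" L] cX LK tX unfolding L_def compact_space_def by auto
  then have cL: "compactin Z L" unfolding X_def compactin_subtopology by blast
  obtain O1 where O: "openin Z O1" "W0 = O1 \<inter> K" using W0(1) unfolding X_def openin_subtopology by blast
  have oW: "openin Z (W0 \<inter> U)" using O UK(1,4) by (metis Int_assoc inf.absorb_iff2 openin_Int)
  have "W0 \<subseteq> L" unfolding L_def using closure_of_subset openin_subset[OF W0(1)] by blast
  then show ?thesis using oW cL LS W0(2) UK(3) by (intro exI[of _ "W0 \<inter> U"] exI[of _ L]) auto
qed


lemma Hact_HZ: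
  assumes S: "S \<in> HZ_set Z" and g: "g \<in> topspace G" and e: "Hp S = r g"
  shows "Hact S g \<in> HZ_set Z"
proof -
  have pS: "\<forall>x\<in>S. p x = r g" using Hp_eq S e by metis
  have SZ: "S \<subseteq> topspace Z" using HZ_sub[OF S] .
  have sub: "Hact S g \<subseteq> topspace Z" using act_in SZ pS g unfolding Hact_def by auto
  have ne: "Hact S g \<noteq> {}" using HZ_ne[OF S] unfolding Hact_def by auto
  have fip: "topspace Z \<inter> \<Inter>F \<noteq> {}" if F: "finite F" "\<forall>V\<in>F. openin Z V \<and> V \<inter> Hact S g \<noteq> {}" for F
  proof (cases "F = {}")
    case True then show ?thesis using sub ne by auto
  next
    case False
    have ex: "\<forall>V\<in>F. \<exists>A B. openin Z A \<and> openin G B \<and> g \<in> B \<and> A \<inter> S \<noteq> {} \<and>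
        (\<forall>x'\<in>A. \<forall>h\<in>B. p x' = r h \<longrightarrow> act x' h \<in> V)"
    proof
      fix V assume V: "V \<in> F"
      then obtain x where x: "x \<in> S" "act x g \<in> V" using F(2) unfolding Hact_def by auto
      have xx: "x \<in> topspace Z" "p x = r g" using x(1) SZ pS by auto
      obtain A B where AB: "openin Z A" "openin G B" "x \<in> A" "g \<in> B"
        "\<forall>x'\<in>A. \<forall>h\<in>B. p x' = r h \<longrightarrow> act x' h \<in> V"
        using act_cont_pt[OF _ xx(1) g xx(2) x(2)] F(2) V by blast
      show "\<exists>A B. openin Z A \<and> openin G B \<and> g \<in> B \<and> A \<inter> S \<noteq> {} \<and>
        (\<forall>x'\<in>A. \<forall>h\<in>B. p x' = r h \<longrightarrow> act x' h \<in> V)"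
        using AB x(1) by blast
    qed
    then obtain A where hA: "\<forall>V\<in>F. \<exists>B. openin Z (A V) \<and> openin G B \<and> g \<in> B \<and> A V \<inter> S \<noteq> {} \<and>
        (\<forall>x'\<in>A V. \<forall>h\<in>B. p x' = r h \<longrightarrow> act x' h \<in> V)"
      using bchoice[OF ex] by blast
    then obtain B where hB: "\<forall>V\<in>F. openin Z (A V) \<and> openin G (B V) \<and> g \<in> B V \<and> A V \<inter> S \<noteq> {} \<and>
        (\<forall>x'\<in>A V. \<forall>h\<in>B V. p x' = r h \<longrightarrow> act x' h \<in> V)"
      using bchoice[OF hA] by blast
    define N where "N = topspace G \<inter> (\<Inter>V\<in>F. B V)"
    have oN: "openin G N" unfolding N_def using openin_fin_Inter[OF F(1)] hB by blast
    have gN: "g \<in> N" unfolding N_def using g hB by blast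
    have oR: "openin (unit_space G r) (r ` N)" using ropen oN unfolding open_map_def by blast
    define P where "P = {z \<in> topspace Z. p z \<in> r ` N}"
    have oP: "openin Z P" unfolding P_def using openin_continuous_map_preimage[OF p_cont oR] .
    have "topspace Z \<inter> \<Inter>((\<lambda>V. A V \<inter> P) ` F) \<noteq> {}"
    proof (rule HZ_fip[OF S])
      show "finite ((\<lambda>V. A V \<inter> P) ` F)" using F(1) by simp
    next
      fix W assume "W \<in> (\<lambda>V. A V \<inter> P) ` F"
      then obtain V where V: "V \<in> F" "W = A V \<inter> P" by blast
      obtain x where x: "x \<in> A V" "x \<in> S" using hB V(1) by blast
      have "x \<in> P" unfolding P_def using x(2) SZ pS gN by auto
      then show "openin Z W \<and> W \<inter> S \<noteq> {}" using V hB oP x by blast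
    qed
    then obtain z where z: "z \<in> topspace Z" "\<forall>V\<in>F. z \<in> A V \<and> z \<in> P" by blast
    obtain V0 where "V0 \<in> F" using False by blast
    then have "z \<in> P" using z by blast
    then obtain h where h: "h \<in> N" "p z = r h" unfolding P_def by auto
    have hG: "h \<in> topspace G" using h(1) unfolding N_def by blast
    have "act z h \<in> topspace Z" using act_in[OF z(1) hG h(2)] by blast
    moreover have "\<forall>V\<in>F. act z h \<in> V" using hB z h unfolding N_def by blast
    ultimately show ?thesis by blast
  qed
  show ?thesis unfolding HZ_set_def using sub ne fip by blast
qed

lemma Hp_Hact:
  assumes S: "S \<in> HZ_set Z" and g: "g \<in> topspace G" and e: "Hp S = r g"
  shows "Hp (Hact S g) = s g"
proof -
  obtain x where x: "x \<in> S" using HZ_ne[OF S] by blast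
  have xx: "x \<in> topspace Z" "p x = r g" using x HZ_sub[OF S] Hp_eq[OF S x] e by auto
  have "act x g \<in> Hact S g" using x unfolding Hact_def by blast
  then have "Hp (Hact S g) = p (act x g)" using Hp_eq[OF Hact_HZ[OF S g e]] by blast
  then show ?thesis using act_in[OF xx(1) g xx(2)] by simp
qed

lemma Hp_cont: "continuous_map (HZ Z) (unit_space G r) Hp"
  unfolding continuous_map_def
proof (intro conjI allI impI)
  show "Hp \<in> topspace (HZ Z) \<rightarrow> topspace (unit_space G r)"
  proof
    fix S assume "S \<in> topspace (HZ Z)"
    then have S: "S \<in> HZ_set Z" using HZ_topspace by blast
    obtain x where x: "x \<in> S" using HZ_ne[OF S] by blast
    show "Hp S \<in> topspace (unit_space G r)" using Hp_eq[OF S x] pZ HZ_sub[OF S] x by auto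
  qed
next
  fix U assume U: "openin (unit_space G r) U"
  have "{S \<in> topspace (HZ Z). Hp S \<in> U} = {S \<in> HZ_set Z. S \<inter> {z \<in> topspace Z. p z \<in> U} \<noteq> {}}"
  proof (intro set_eqI iffI)
    fix S assume "S \<in> {S \<in> topspace (HZ Z). Hp S \<in> U}"
    then have S: "S \<in> HZ_set Z" "Hp S \<in> U" using HZ_topspace by auto
    obtain x where x: "x \<in> S" using HZ_ne[OF S(1)] by blast
    show "S \<in> {S \<in> HZ_set Z. S \<inter> {z \<in> topspace Z. p z \<in> U} \<noteq> {}}"
      using S x Hp_eq[OF S(1) x] HZ_sub[OF S(1)] by auto
  next
    fix S assume "S \<in> {S \<in> HZ_set Z. S \<inter> {z \<in> topspace Z. p z \<in> U} \<noteq> {}}"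
    then obtain x where S: "S \<in> HZ_set Z" "x \<in> S" "p x \<in> U" by auto
    show "S \<in> {S \<in> topspace (HZ Z). Hp S \<in> U}" using S Hp_eq[OF S(1,2)] HZ_topspace by auto
  qed
  then show "openin (HZ Z) {S \<in> topspace (HZ Z). Hp S \<in> U}"
    using HZ_open_meet[OF openin_continuous_map_preimage[OF p_cont U]] by simp
qed

definition DH where "DH = {(x,g). x \<in> topspace (HZ Z) \<and> g \<in> topspace G \<and> Hp x = r g}"

lemma tX: "topspace (subtopology (prod_topology (HZ Z) G) DH) = DH"
  unfolding DH_def by auto

lemma DH_iff: "(S,g) \<in> DH \<longleftrightarrow> S \<in> HZ_set Z \<and> g \<in> topspace G \<and> Hp S = r g"
  unfolding DH_def HZ_topspace by auto

lemma Hact_meet: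
  assumes V: "openin Z V"
  shows "openin (subtopology (prod_topology (HZ Z) G) DH)
     {y \<in> topspace (subtopology (prod_topology (HZ Z) G) DH). (\<lambda>(S,g). Hact S g) y \<inter> V \<noteq> {}}"
  (is "openin ?X ?P")
proof -
  have "\<exists>T. openin ?X T \<and> y \<in> T \<and> T \<subseteq> ?P" if y: "y \<in> ?P" for y
  proof -
    obtain S g where yy: "y = (S,g)" by (cases y)
    have D: "S \<in> HZ_set Z" "g \<in> topspace G" "Hp S = r g" "Hact S g \<inter> V \<noteq> {}"
      using y unfolding yy tX by (auto simp: DH_iff)
    obtain x where x: "x \<in> S" "act x g \<in> V" using D(4) unfolding Hact_def by auto
    have xx: "x \<in> topspace Z" "p x = r g" using x(1) HZ_sub[OF D(1)] Hp_eq[OF D(1) x(1)] D(3) by auto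
    obtain A B where AB: "openin Z A" "openin G B" "x \<in> A" "g \<in> B"
        "\<forall>x'\<in>A. \<forall>h\<in>B. p x' = r h \<longrightarrow> act x' h \<in> V"
      using act_cont_pt[OF V xx(1) D(2) xx(2) x(2)] by blast
    define T where "T = ({S' \<in> HZ_set Z. S' \<inter> A \<noteq> {}} \<times> B) \<inter> DH"
    have oT: "openin ?X T" unfolding T_def by (rule openin_box_sub[OF HZ_open_meet[OF AB(1)] AB(2)])
    have yT: "y \<in> T" unfolding T_def yy using D x AB DH_iff by auto
    have "T \<subseteq> ?P"
    proof
      fix y' assume "y' \<in> T"
      then obtain S' g' where y': "y' = (S',g')" "S' \<in> HZ_set Z" "S' \<inter> A \<noteq> {}" "g' \<in> B" "(S',g') \<in> DH"
        unfolding T_def by auto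
      obtain x' where x': "x' \<in> S'" "x' \<in> A" using y'(3) by blast
      have "p x' = r g'" using Hp_eq[OF y'(2) x'(1)] y'(5) DH_iff by auto
      then have "act x' g' \<in> V" using AB(5) x' y'(4) by blast
      then have "Hact S' g' \<inter> V \<noteq> {}" using x'(1) unfolding Hact_def by blast
      then show "y' \<in> ?P" using y'(1,5) tX by auto
    qed
    then show ?thesis using oT yT by blast
  qed
  then show ?thesis by (subst openin_subopen) blast
qed

lemma miss_loc:
  assumes S: "S \<in> HZ_set Z" and g: "g \<in> topspace G" and Qd: "Hact S g \<inter> Q = {}"
    and q: "q \<in> Q" "q \<in> topspace Z"
  shows "\<exists>A B L. openin Z A \<and> openin G B \<and> q \<in> A \<and> g \<in> B \<and> compactin Z L \<and> L \<inter> S = {} \<and>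
     (\<forall>q'\<in>A. \<forall>h\<in>B. p q' = s h \<longrightarrow> act q' (i h) \<in> L)"
proof (cases "p q = s g")
  case True
  have ig: "i g \<in> topspace G" "p q = r (i g)" "s (i g) = r g" using G_closed[OF g] inv_laws[OF g] True by auto
  define c where "c = act q (i g)"
  have cZ: "c \<in> topspace Z" using act_in[OF q(2) ig(1,2)] c_def by simp
  have "act c g = act q (m (i g) g)" unfolding c_def using act_assoc[OF q(2) ig(1) g ig(2,3)] .
  also have "\<dots> = q" using inv_laws[OF g] act_unit[OF q(2)] True by simp
  finally have "act c g = q" .
  then have cS: "c \<notin> S" using Qd q(1) unfolding Hact_def by auto
  obtain W L where WL: "openin Z W" "compactin Z L" "c \<in> W" "W \<subseteq> L" "L \<inter> S = {}"
    using lc_sep[OF S cZ cS] by blast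
  obtain A B where AB: "openin Z A" "openin G B" "q \<in> A" "g \<in> B"
     "\<forall>q'\<in>A. \<forall>h\<in>B. p q' = s h \<longrightarrow> act q' (i h) \<in> W"
    using act_inv_cont_pt[OF WL(1) q(2) g True] WL(3) c_def by blast
  show ?thesis
    apply (rule exI[of _ A], rule exI[of _ B], rule exI[of _ L])
    using AB WL by blast
next
  case False
  have "p q \<in> topspace (unit_space G r)" "s g \<in> topspace (unit_space G r)" using pZ[OF q(2)] s_unit[OF g] by auto
  then obtain U V where UV: "openin (unit_space G r) U" "openin (unit_space G r) V"
     "p q \<in> U" "s g \<in> V" "disjnt U V"
    using haus False unfolding Hausdorff_space_def by blast
  define A where "A = {z \<in> topspace Z. p z \<in> U}"
  define B where "B = {h \<in> topspace G. s h \<in> V}"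
  have oA: "openin Z A" unfolding A_def using openin_continuous_map_preimage[OF p_cont UV(1)] .
  have oB: "openin G B" unfolding B_def using openin_continuous_map_preimage[OF s_cont_unit UV(2)] .
  have nn: "\<forall>q'\<in>A. \<forall>h\<in>B. p q' \<noteq> s h" using UV(5) unfolding A_def B_def disjnt_def by auto
  show ?thesis
    apply (rule exI[of _ A], rule exI[of _ B], rule exI[of _ "{}"])
    using nn oA oB q g UV(3,4) unfolding A_def B_def by auto
qed

lemma Hact_miss:
  assumes Q: "compactin Z Q"
  shows "openin (subtopology (prod_topology (HZ Z) G) DH)
     {y \<in> topspace (subtopology (prod_topology (HZ Z) G) DH). (\<lambda>(S,g). Hact S g) y \<inter> Q = {}}"
  (is "openin ?X ?P")
proof -
  have QZ: "Q \<subseteq> topspace Z" using Q by (rule compactin_subset_topspace)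
  have "\<exists>T. openin ?X T \<and> y \<in> T \<and> T \<subseteq> ?P" if y: "y \<in> ?P" for y
  proof -
    obtain S g where yy: "y = (S,g)" by (cases y)
    have D: "S \<in> HZ_set Z" "g \<in> topspace G" "Hp S = r g" "Hact S g \<inter> Q = {}"
      using y unfolding yy tX by (auto simp: DH_iff)
    have ex: "\<forall>q\<in>Q. \<exists>A B L. openin Z A \<and> openin G B \<and> q \<in> A \<and> g \<in> B \<and> compactin Z L \<and> L \<inter> S = {} \<and>
     (\<forall>q'\<in>A. \<forall>h\<in>B. p q' = s h \<longrightarrow> act q' (i h) \<in> L)"
      using miss_loc[OF D(1,2,4)] QZ by blast
    then obtain A where hA: "\<forall>q\<in>Q. \<exists>B L. openin Z (A q) \<and> openin G B \<and> q \<in> A q \<and> g \<in> B \<and> compactin Z L \<and> L \<inter> S = {} \<and>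
     (\<forall>q'\<in>A q. \<forall>h\<in>B. p q' = s h \<longrightarrow> act q' (i h) \<in> L)"
      using bchoice[OF ex] by blast
    then obtain B where hB: "\<forall>q\<in>Q. \<exists>L. openin Z (A q) \<and> openin G (B q) \<and> q \<in> A q \<and> g \<in> B q \<and> compactin Z L \<and> L \<inter> S = {} \<and>
     (\<forall>q'\<in>A q. \<forall>h\<in>B q. p q' = s h \<longrightarrow> act q' (i h) \<in> L)"
      using bchoice[OF hA] by blast
    then obtain L where hL: "\<forall>q\<in>Q. openin Z (A q) \<and> openin G (B q) \<and> q \<in> A q \<and> g \<in> B q \<and> compactin Z (L q) \<and> L q \<inter> S = {} \<and>
     (\<forall>q'\<in>A q. \<forall>h\<in>B q. p q' = s h \<longrightarrow> act q' (i h) \<in> L q)"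
      using bchoice[OF hB] by blast
    have "\<exists>F. finite F \<and> F \<subseteq> A ` Q \<and> Q \<subseteq> \<Union>F"
      using Q hL unfolding compactin_def by (metis (no_types, lifting) UN_I imageE subsetI)
    then obtain F where F: "finite F" "F \<subseteq> A ` Q" "Q \<subseteq> \<Union>F" by blast
    obtain Q0 where Q0: "Q0 \<subseteq> Q" "finite Q0" "F = A ` Q0" using finite_subset_image[OF F(1,2)] by blast
    define N where "N = topspace G \<inter> (\<Inter>q\<in>Q0. B q)"
    define L' where "L' = \<Union>(L ` Q0)"
    have oN: "openin G N" unfolding N_def using openin_fin_Inter[OF Q0(2)] hL Q0(1) by blast
    have cL': "compactin Z L'" unfolding L'_def using compactin_Union[of "L ` Q0"] Q0 hL by blast
    define T where "T = ({S' \<in> HZ_set Z. S' \<inter> L' = {}} \<times> N) \<inter> DH"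
    have oT: "openin ?X T" unfolding T_def by (rule openin_box_sub[OF HZ_open_miss[OF cL'] oN])
    have yT: "y \<in> T" unfolding T_def yy N_def L'_def using D hL Q0(1) DH_iff by blast
    have "T \<subseteq> ?P"
    proof
      fix y' assume "y' \<in> T"
      then obtain S' g' where y': "y' = (S',g')" "S' \<in> HZ_set Z" "S' \<inter> L' = {}" "g' \<in> N" "(S',g') \<in> DH"
        unfolding T_def by auto
      have g'G: "g' \<in> topspace G" using y'(4) unfolding N_def by blast
      have "Hact S' g' \<inter> Q = {}"
      proof (rule ccontr)
        assume "Hact S' g' \<inter> Q \<noteq> {}"
        then obtain x where x: "x \<in> S'" "act x g' \<in> Q" unfolding Hact_def by auto
        have xx: "x \<in> topspace Z" "p x = r g'"
          using x(1) HZ_sub[OF y'(2)] Hp_eq[OF y'(2) x(1)] y'(5) DH_iff by auto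
        define q' where "q' = act x g'"
        obtain q0 where q0: "q0 \<in> Q0" "q' \<in> A q0" using F(3) Q0(3) x(2) q'_def by blast
        have "p q' = s g'" unfolding q'_def using act_in[OF xx(1) g'G xx(2)] by simp
        moreover have "g' \<in> B q0" using y'(4) q0(1) unfolding N_def by blast
        ultimately have "act q' (i g') \<in> L q0" using hL q0 Q0(1) by blast
        moreover have "act q' (i g') = x" unfolding q'_def using act_inv[OF xx(1) g'G xx(2)] .
        ultimately have "x \<in> L'" unfolding L'_def using q0(1) by blast
        then show False using y'(3) x(1) by blast
      qed
      then show "y' \<in> ?P" using y'(1,5) tX by auto
    qed
    then show ?thesis using oT yT by blast
  qed
  then show ?thesis by (subst openin_subopen) blast
qed

lemma Hact_cont: "continuous_map (subtopology (prod_topology (HZ Z) G) DH) (HZ Z) (\<lambda>(S,g). Hact S g)"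
proof (rule cont_into_HZ)
  fix y assume "y \<in> topspace (subtopology (prod_topology (HZ Z) G) DH)"
  then obtain S g where "y = (S,g)" "S \<in> HZ_set Z" "g \<in> topspace G" "Hp S = r g"
    unfolding tX by (metis DH_iff surj_pair)
  then show "(\<lambda>(S,g). Hact S g) y \<in> HZ_set Z" using Hact_HZ by simp
qed (use Hact_meet Hact_miss in auto)

end

theorem proposition3p10:
  fixes G :: "'g topology" and r s :: "'g \<Rightarrow> 'g" and m :: "'g \<Rightarrow> 'g \<Rightarrow> 'g"
    and i :: "'g \<Rightarrow> 'g" and Z :: "'z topology" and p :: "'z \<Rightarrow> 'g"
    and act :: "'z \<Rightarrow> 'g \<Rightarrow> 'z"
  assumes "topological_groupoid G r s m i"
    and "Hausdorff_space (unit_space G r)"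
    and "open_map G (unit_space G r) r"
    and "locally_compact_qc Z"
    and "continuous_right_action G r s m Z p act"
  shows "\<exists>Hp Hact.
     continuous_right_action G r s m (HZ Z) Hp Hact \<and>
     continuous_map (HZ Z) (unit_space G r) Hp \<and>
     (\<forall>S\<in>HZ_set Z. S \<subseteq> {z \<in> topspace Z. p z = Hp S}) \<and>
     (\<forall>q. continuous_map (HZ Z) (unit_space G r) q \<and>
          (\<forall>S\<in>HZ_set Z. S \<subseteq> {z \<in> topspace Z. p z = q S})
          \<longrightarrow> (\<forall>S\<in>HZ_set Z. q S = Hp S)) \<and>
     (\<forall>S\<in>HZ_set Z. \<forall>g\<in>topspace G. r g = Hp S \<longrightarrow> Hact S g = (\<lambda>x. act x g) ` S) \<and>
     (\<forall>z\<in>topspace Z. {z} \<in> HZ_set Z \<and> Hp {z} = p z \<and>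
          (\<forall>g\<in>topspace G. r g = p z \<longrightarrow> Hact {z} g = {act z g}))"
proof -
  interpret H: hzctx G r s m i Z p act using assms by unfold_locales
  have c1: "continuous_right_action G r s m (HZ Z) H.Hp H.Hact"
    unfolding continuous_right_action_def
  proof (intro conjI ballI impI)
    show "continuous_map (HZ Z) (unit_space G r) H.Hp" by (rule H.Hp_cont)
  next
    fix S g assume S: "S \<in> topspace (HZ Z)" and g: "g \<in> topspace G" and e: "H.Hp S = r g"
    have S': "S \<in> HZ_set Z" using S HZ_topspace by blast
    show "H.Hact S g \<in> topspace (HZ Z)" using H.Hact_HZ[OF S' g e] HZ_topspace by blast
    show "H.Hp (H.Hact S g) = s g" using H.Hp_Hact[OF S' g e] .
  next
    fix S assume S: "S \<in> topspace (HZ Z)"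
    have S': "S \<in> HZ_set Z" using S HZ_topspace by blast
    have eq: "\<forall>x\<in>S. act x (H.Hp S) = x"
    proof
      fix x assume x: "x \<in> S"
      have "x \<in> topspace Z" using x H.HZ_sub[OF S'] by blast
      then show "act x (H.Hp S) = x" using H.Hp_eq[OF S' x] H.act_unit by simp
    qed
    have "(\<lambda>x. act x (H.Hp S)) ` S = (\<lambda>x. x) ` S"
      by (rule image_cong[OF refl]) (use eq in blast)
    then show "H.Hact S (H.Hp S) = S" unfolding H.Hact_def by simp
  next
    fix S g h assume S: "S \<in> topspace (HZ Z)" and g: "g \<in> topspace G" and h: "h \<in> topspace G"
      and e: "H.Hp S = r g \<and> s g = r h"
    have S': "S \<in> HZ_set Z" using S HZ_topspace by blast
    have eq: "\<forall>x\<in>S. act (act x g) h = act x (m g h)"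
    proof
      fix x assume x: "x \<in> S"
      have "x \<in> topspace Z" using x H.HZ_sub[OF S'] by blast
      moreover have "p x = r g" using H.Hp_eq[OF S' x] e by simp
      ultimately show "act (act x g) h = act x (m g h)" using H.act_assoc g h e by blast
    qed
    show "H.Hact (H.Hact S g) h = H.Hact S (m g h)" unfolding H.Hact_def image_image
      by (rule image_cong[OF refl]) (use eq in blast)
  next
    show "continuous_map (subtopology (prod_topology (HZ Z) G)
          {(x, g). x \<in> topspace (HZ Z) \<and> g \<in> topspace G \<and> H.Hp x = r g}) (HZ Z) (\<lambda>(x, g). H.Hact x g)"
      using H.Hact_cont unfolding H.DH_def .
  qed
  show ?thesis
  proof (rule exI[of _ H.Hp], rule exI[of _ H.Hact], intro conjI)
    show "continuous_right_action G r s m (HZ Z) H.Hp H.Hact" by (rule c1)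
    show "continuous_map (HZ Z) (unit_space G r) H.Hp" by (rule H.Hp_cont)
    show "\<forall>S\<in>HZ_set Z. S \<subseteq> {z \<in> topspace Z. p z = H.Hp S}"
    proof (intro ballI subsetI)
      fix S x assume S: "S \<in> HZ_set Z" and x: "x \<in> S"
      show "x \<in> {z \<in> topspace Z. p z = H.Hp S}" using H.Hp_eq[OF S x] H.HZ_sub[OF S] x by auto
    qed
    show "\<forall>q. continuous_map (HZ Z) (unit_space G r) q \<and>
          (\<forall>S\<in>HZ_set Z. S \<subseteq> {z \<in> topspace Z. p z = q S})
          \<longrightarrow> (\<forall>S\<in>HZ_set Z. q S = H.Hp S)"
    proof (intro allI impI ballI)
      fix q S assume q: "continuous_map (HZ Z) (unit_space G r) q \<and>
          (\<forall>S\<in>HZ_set Z. S \<subseteq> {z \<in> topspace Z. p z = q S})" and S: "S \<in> HZ_set Z"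
      obtain x where x: "x \<in> S" using H.HZ_ne[OF S] by blast
      have "x \<in> {z \<in> topspace Z. p z = q S}" using q S x by blast
      then show "q S = H.Hp S" using H.Hp_eq[OF S x] by simp
    qed
    show "\<forall>S\<in>HZ_set Z. \<forall>g\<in>topspace G. r g = H.Hp S \<longrightarrow> H.Hact S g = (\<lambda>x. act x g) ` S"
      unfolding H.Hact_def by blast
    show "\<forall>z\<in>topspace Z. {z} \<in> HZ_set Z \<and> H.Hp {z} = p z \<and>
          (\<forall>g\<in>topspace G. r g = p z \<longrightarrow> H.Hact {z} g = {act z g})"
    proof (intro ballI conjI impI)
      fix z assume z: "z \<in> topspace Z"
      show zs: "{z} \<in> HZ_set Z" using HZ_set_sing[OF z] .
      show "H.Hp {z} = p z" using H.Hp_eq[OF zs] by simp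
      fix g show "H.Hact {z} g = {act z g}" unfolding H.Hact_def by simp
    qed
  qed
qed

end
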